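(* Assume all struts are straight, and let $n\ge1$, $k\ge0$ be integers with $k\ge n-1$. If $\psi\in M_n$ satisfies $b(\Sigma,\psi)=0$ for all $\Sigma\in V_k$, then $\psi=0$; i.e. $\operatorname{Ker}B_h^T=\{0\}$.
   Context: Network: a stent is modelled by a finite connected graph with vertices $j=1,\dots,n_{\mathcal V}$ and oriented edges $i=1,\dots,n_{\mathcal E}$. $J_j^-$ ($J_j^+$) is the set of edges leaving (entering) vertex $j$. Edge $i$ is a straight segment of length $\ell^i>0$, parametrized as $\Phi^i(s)=\Phi^i(0)+s\,t^i$, $s\in[0,\ell^i]$, with constant unit tangent $t^i$; $s=0$ at the vertex it leaves, $s=\ell^i$ at the vertex it enters. Matrices: $A^+_{I}\in\mathbb{R}^{3n_{\mathcal V}\times 3n_{\mathcal E}}$ has $3\times3$ block $I_3$ in block row $j$, block column $i$ if $i\in J_j^+$ and $0$ otherwise; $A^-_I$ likewise with $J_j^-$. Notation: $P_m(\mathcal N)$ denotes functions that on each edge $[0,\ell^i]$ are real polynomials of degree at most $m$ (no continuity at vertices); $\int_{\mathcal N}v=\sum_i\int_0^{\ell^i}v^i\,ds$. $V_k=P_k(\mathcal N)^3\times P_k(\mathcal N)^3\times(\mathbb{R}^{3n_{\mathcal E}})^4\times\mathbb{R}^3\times\mathbb{R}^3$ with elements $\Sigma=(q,p,P_+,P_-,Q_+,Q_-,\alpha,\beta)$, $M_n=P_n(\mathcal N)^3\times P_n(\mathcal N)^3\times\mathbb{R}^{3n_{\mathcal V}}\times\mathbb{R}^{3n_{\mathcal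 V}}$ with elements $\psi=(v,w,V,W)$. $b(\Sigma,\psi)=\sum_i\int_0^{\ell^i}\big(-p^i\cdot(\partial_sv^i+t^i\times w^i)-q^i\cdot\partial_sw^i\big)ds+\sum_i\big(P^i_+\cdot v^i(\ell^i)-P^i_-\cdot v^i(0)\big)+\sum_i\big(Q^i_+\cdot w^i(\ell^i)-Q^i_-\cdot w^i(0)\big)-(A^+_IP_+-A^-_IP_-)\cdot V-(A^+_IQ_+-A^-_IQ_-)\cdot W+\alpha\cdot\int_{\mathcal N}v+\beta\cdot\int_{\mathcal N}w$. *)

theory Defs
  imports "HOL-Analysis.Analysis" "HOL-Analysis.Cross3" "HOL-Computational_Algebra.Polynomial"
begin

(* Vertices are 1..nV, edges are 1..nE.
   Edge i leaves vertex src i and enters vertex tgt i, has length len i and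
   constant unit tangent tang i; pos j is the position of vertex j. *)
record network =
  nV :: nat
  nE :: nat
  src :: "nat \<Rightarrow> nat"
  tgt :: "nat \<Rightarrow> nat"
  len :: "nat \<Rightarrow> real"
  tang :: "nat \<Rightarrow> real^3"
  pos :: "nat \<Rightarrow> real^3"

definition edges :: "network \<Rightarrow> nat set" where "edges N = {1..nE N}"
definition verts :: "network \<Rightarrow> nat set" where "verts N = {1..nV N}"

definition adj :: "network \<Rightarrow> (nat \<times> nat) set" where
  "adj N = {(src N i, tgt N i) | i. i \<in> edges N} \<union> {(tgt N i, src N i) | i. i \<in> edges N}"

definition connected_network :: "network \<Rightarrow> bool" where
  "connected_network N \<longleftrightarrow> (\<forall>a\<in>verts N. \<forall>b\<in>verts N. (a, b) \<in> (adj N)\<^sup>*)"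

definition straight_network :: "network \<Rightarrow> bool" where
  "straight_network N \<longleftrightarrow>
     nV N \<ge> 1 \<and> nE N \<ge> 1 \<and> connected_network N \<and>
     (\<forall>i\<in>edges N. src N i \<in> verts N \<and> tgt N i \<in> verts N \<and> len N i > 0 \<and>
        norm (tang N i) = 1 \<and> pos N (tgt N i) = pos N (src N i) + len N i *\<^sub>R tang N i)"

(* edgewise R^3-valued polynomial functions, represented componentwise:
   v i j is the j-th component polynomial on edge i *)
type_synonym pfun = "nat \<Rightarrow> 3 \<Rightarrow> real poly"

definition ev :: "(3 \<Rightarrow> real poly) \<Rightarrow> real \<Rightarrow> real^3" where
  "ev p s = (\<chi> j. poly (p j) s)"

definition dv :: "(3 \<Rightarrow> real poly) \<Rightarrow> 3 \<Rightarrow> real poly" where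
  "dv p = (\<lambda>j. pderiv (p j))"

definition inP :: "network \<Rightarrow> nat \<Rightarrow> pfun \<Rightarrow> bool" where
  "inP N m v \<longleftrightarrow> (\<forall>i\<in>edges N. \<forall>j. degree (v i j) \<le> m)"

definition netint :: "network \<Rightarrow> pfun \<Rightarrow> real^3" where
  "netint N v = (\<Sum>i\<in>edges N. integral {0..len N i} (ev (v i)))"

definition Aplus :: "network \<Rightarrow> (nat \<Rightarrow> real^3) \<Rightarrow> nat \<Rightarrow> real^3" where
  "Aplus N P j = (\<Sum>i\<in>{i\<in>edges N. tgt N i = j}. P i)"
definition Aminus :: "network \<Rightarrow> (nat \<Rightarrow> real^3) \<Rightarrow> nat \<Rightarrow> real^3" where
  "Aminus N P j = (\<Sum>i\<in>{i\<in>edges N. src N i = j}. P i)"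

(* the bilinear form b(Sigma, psi), Sigma = (q,p,P+,P-,Q+,Q-,alpha,beta), psi = (v,w,V,W) *)
definition bform :: "network \<Rightarrow> pfun \<Rightarrow> pfun \<Rightarrow> (nat \<Rightarrow> real^3) \<Rightarrow> (nat \<Rightarrow> real^3)
    \<Rightarrow> (nat \<Rightarrow> real^3) \<Rightarrow> (nat \<Rightarrow> real^3) \<Rightarrow> real^3 \<Rightarrow> real^3
    \<Rightarrow> pfun \<Rightarrow> pfun \<Rightarrow> (nat \<Rightarrow> real^3) \<Rightarrow> (nat \<Rightarrow> real^3) \<Rightarrow> real" where
  "bform N q p Pp Pm Qp Qm \<alpha> \<beta> v w V W =
     (\<Sum>i\<in>edges N. integral {0..len N i}
        (\<lambda>s. - (ev (p i) s \<bullet> (ev (dv (v i)) s + cross3 (tang N i) (ev (w i) s)))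
             - ev (q i) s \<bullet> ev (dv (w i)) s))
   + (\<Sum>i\<in>edges N. Pp i \<bullet> ev (v i) (len N i) - Pm i \<bullet> ev (v i) 0)
   + (\<Sum>i\<in>edges N. Qp i \<bullet> ev (w i) (len N i) - Qm i \<bullet> ev (w i) 0)
   - (\<Sum>j\<in>verts N. (Aplus N Pp j - Aminus N Pm j) \<bullet> V j)
   - (\<Sum>j\<in>verts N. (Aplus N Qp j - Aminus N Qm j) \<bullet> W j)
   + \<alpha> \<bullet> netint N v + \<beta> \<bullet> netint N w"

end

theory Submission
  imports Defs
begin

lemma ev_cont: "continuous_on S (ev p)"
  unfolding ev_def by (intro continuous_on_vec_lambda continuous_intros)

lemma ev_zero[simp]: "ev (\<lambda>j. 0) s = 0"
  by (simp add: ev_def vec_eq_iff)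

lemma poly_zero_on_interval:
  fixes p :: "real poly"
  assumes "l > 0" "\<And>s. s \<in> {0..l} \<Longrightarrow> poly p s = 0"
  shows "p = 0"
proof (rule ccontr)
  assume "p \<noteq> 0"
  then have "finite {x. poly p x = 0}" by (rule poly_roots_finite)
  moreover have "{0..l} \<subseteq> {x. poly p x = 0}" using assms(2) by auto
  ultimately have "finite {0..l}" by (rule finite_subset[rotated])
  then show False using assms(1) infinite_Icc by blast
qed

lemma sq_int_zero:
  assumes "l > 0" "integral {0..l} (\<lambda>s. ev p s \<bullet> ev p s) = 0"
  shows "p = (\<lambda>j. 0)"
proof -
  have cont: "continuous_on {0..l} (\<lambda>s. ev p s \<bullet> ev p s)"
    by (intro continuous_intros ev_cont)
  have hi: "((\<lambda>s. ev p s \<bullet> ev p s) has_integral 0) (cbox 0 l)"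
    using integrable_integral[OF integrable_continuous_real[OF cont]] assms(2) by simp
  have "ev p s \<bullet> ev p s = 0" if "s \<in> {0..l}" for s
    using has_integral_0_cbox_imp_0[of 0 l "\<lambda>s. ev p s \<bullet> ev p s" s] cont hi assms(1) that
    by auto
  then have "ev p s = 0" if "s \<in> {0..l}" for s using that by simp
  then have "poly (p j) s = 0" if "s \<in> {0..l}" for s j using that
    by (simp add: ev_def vec_eq_iff)
  then show ?thesis using poly_zero_on_interval[OF assms(1)] by auto
qed

lemma conn_const:
  assumes "straight_network N" "\<forall>i\<in>edges N. U (src N i) = U (tgt N i)" "j \<in> verts N"
  shows "U j = U (src N 1)"
proof -
  have e1: "1 \<in> edges N" using assms(1) by (simp add: straight_network_def edges_def)
  then have "src N 1 \<in> verts N" using assms(1) by (simp add: straight_network_def)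
  then have "(src N 1, j) \<in> (adj N)\<^sup>*" using assms(1,3)
    by (simp add: straight_network_def connected_network_def)
  then show ?thesis
  proof (induction rule: rtrancl_induct)
    case base then show ?case by simp
  next
    case (step b c)
    from step.hyps(2) have "U b = U c" using assms(2) by (auto simp: adj_def)
    then show ?case using step.IH by simp
  qed
qed

lemma const_zero:
  assumes sn: "straight_network N"
    and d: "\<forall>i\<in>edges N. \<forall>j. pderiv (u i j) = 0"
    and b: "\<forall>i\<in>edges N. ev (u i) (len N i) = U (tgt N i) \<and> ev (u i) 0 = U (src N i)"
    and ni: "netint N u = 0"
  shows "(\<forall>i\<in>edges N. u i = (\<lambda>j. 0)) \<and> (\<forall>j\<in>verts N. U j = 0)"
proof -
  have cst: "ev (u i) s = ev (u i) 0" if ii: "i \<in> edges N" for i s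
  proof -
    have "poly (u i j) s = poly (u i j) 0" for j
    proof -
      obtain h where "u i j = [:h:]" using pderiv_iszero[OF d[rule_format, OF ii]] by blast
      then show ?thesis by simp
    qed
    then show ?thesis by (auto simp: ev_def vec_eq_iff)
  qed
  have "\<forall>i\<in>edges N. U (src N i) = U (tgt N i)"
  proof
    fix i assume i: "i \<in> edges N"
    have "U (src N i) = ev (u i) 0" using b i by simp
    also have "\<dots> = ev (u i) (len N i)" using cst[OF i, of "len N i"] by simp
    also have "\<dots> = U (tgt N i)" using b i by simp
    finally show "U (src N i) = U (tgt N i)" .
  qed
  then have UU: "U j = U (src N 1)" if "j \<in> verts N" for j using conn_const[OF sn] that by blast
  define c where "c = U (src N 1)"
  have sv: "src N i \<in> verts N" if "i \<in> edges N" for i using sn that by (simp add: straight_network_def)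
  have evc: "ev (u i) s = c" if "i \<in> edges N" for i s 
  proof -
    have "ev (u i) s = ev (u i) 0" using cst[OF that] .
    also have "\<dots> = U (src N i)" using b that by simp
    also have "\<dots> = c" using UU[OF sv[OF that]] c_def by simp
    finally show ?thesis .
  qed
  have lpos: "len N i > 0" if "i \<in> edges N" for i using sn that by (simp add: straight_network_def)
  have "netint N u = (\<Sum>i\<in>edges N. len N i *\<^sub>R c)"
    unfolding netint_def
  proof (rule sum.cong[OF refl])
    fix i assume i: "i \<in> edges N"
    have "integral {0..len N i} (ev (u i)) = integral {0..len N i} (\<lambda>s. c)"
      using evc[OF i] by (metis ext)
    then show "integral {0..len N i} (ev (u i)) = len N i *\<^sub>R c" using lpos[OF i] by simp
  qed
  also have "\<dots> = (\<Sum>i\<in>edges N. len N i) *\<^sub>R c" by (simp add: scaleR_sum_left)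
  finally have "(\<Sum>i\<in>edges N. len N i) *\<^sub>R c = 0" using ni by simp
  moreover have "(\<Sum>i\<in>edges N. len N i) > 0"
  proof (rule sum_pos)
    show "finite (edges N)" by (simp add: edges_def)
    show "edges N \<noteq> {}" using sn by (auto simp: edges_def straight_network_def)
  qed (use lpos in auto)
  ultimately have c0: "c = 0" by simp
  have "u i = (\<lambda>j. 0)" if ii: "i \<in> edges N" for i
  proof
    fix j
    obtain h where h: "u i j = [:h:]" using pderiv_iszero[OF d[rule_format, OF ii]] by blast
    have "poly (u i j) 0 = 0" using evc[OF ii, of 0] c0 by (simp add: ev_def vec_eq_iff)
    then show "u i j = 0" using h by simp
  qed
  then show ?thesis using UU c_def c0 by simp
qed

lemma fin_edges[simp]: "finite (edges N)" by (simp add: edges_def)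
lemma fin_verts[simp]: "finite (verts N)" by (simp add: verts_def)

lemma Aplus_zero[simp]: "Aplus N (\<lambda>i. 0) j = 0" by (simp add: Aplus_def)
lemma Aminus_zero[simp]: "Aminus N (\<lambda>i. 0) j = 0" by (simp add: Aminus_def)

lemma sum_Aplus_delta:
  assumes "i \<in> edges N" "tgt N i \<in> verts N"
  shows "(\<Sum>j\<in>verts N. Aplus N (\<lambda>i'. if i' = i then x else 0) j \<bullet> W j) = x \<bullet> W (tgt N i)"
proof -
  have "Aplus N (\<lambda>i'. if i' = i then x else 0) j = (if tgt N i = j then x else 0)" for j
    unfolding Aplus_def using assms(1) by (simp add: sum.delta' )
  then have "(\<Sum>j\<in>verts N. Aplus N (\<lambda>i'. if i' = i then x else 0) j \<bullet> W j) = (\<Sum>j\<in>verts N. if tgt N i = j then x \<bullet> W j else 0)"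
    by (intro sum.cong) auto
  then show ?thesis using assms(2) by simp
qed

lemma sum_Aminus_delta:
  assumes "i \<in> edges N" "src N i \<in> verts N"
  shows "(\<Sum>j\<in>verts N. Aminus N (\<lambda>i'. if i' = i then x else 0) j \<bullet> W j) = x \<bullet> W (src N i)"
proof -
  have "Aminus N (\<lambda>i'. if i' = i then x else 0) j = (if src N i = j then x else 0)" for j
    unfolding Aminus_def using assms(1) by (simp add: sum.delta' )
  then have "(\<Sum>j\<in>verts N. Aminus N (\<lambda>i'. if i' = i then x else 0) j \<bullet> W j) = (\<Sum>j\<in>verts N. if src N i = j then x \<bullet> W j else 0)"
    by (intro sum.cong) auto
  then show ?thesis using assms(2) by simp
qed

lemma sum_delta_inner:
  fixes x :: "real^3"
  assumes "finite E" "i \<in> E"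
  shows "(\<Sum>ia\<in>E. (if ia = i then x else 0) \<bullet> f ia) = x \<bullet> f i"
proof -
  have "(\<Sum>ia\<in>E. (if ia = i then x else 0) \<bullet> f ia) = (\<Sum>ia\<in>E. if ia = i then x \<bullet> f ia else 0)"
    by (intro sum.cong) auto
  then show ?thesis using assms by simp
qed

lemma test_beta:
  "bform N (\<lambda>i j. 0) (\<lambda>i j. 0) (\<lambda>i. 0) (\<lambda>i. 0) (\<lambda>i. 0) (\<lambda>i. 0) 0 \<beta> v w V W = \<beta> \<bullet> netint N w"
  by (simp add: bform_def)

lemma test_alpha:
  "bform N (\<lambda>i j. 0) (\<lambda>i j. 0) (\<lambda>i. 0) (\<lambda>i. 0) (\<lambda>i. 0) (\<lambda>i. 0) \<alpha> 0 v w V W = \<alpha> \<bullet> netint N v"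
  by (simp add: bform_def)

lemma test_Qp:
  assumes "i \<in> edges N" "tgt N i \<in> verts N"
  shows "bform N (\<lambda>i j. 0) (\<lambda>i j. 0) (\<lambda>i. 0) (\<lambda>i. 0) (\<lambda>i'. if i' = i then x else 0) (\<lambda>i. 0) 0 0 v w V W
     = x \<bullet> ev (w i) (len N i) - x \<bullet> W (tgt N i)"
  using sum_Aplus_delta[OF assms, of x W] assms(1)
  by (simp add: bform_def sum_delta_inner)

lemma test_Qm:
  assumes "i \<in> edges N" "src N i \<in> verts N"
  shows "bform N (\<lambda>i j. 0) (\<lambda>i j. 0) (\<lambda>i. 0) (\<lambda>i. 0) (\<lambda>i. 0) (\<lambda>i'. if i' = i then x else 0) 0 0 v w V W
     = - (x \<bullet> ev (w i) 0) + x \<bullet> W (src N i)"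
  using sum_Aminus_delta[OF assms, of x W] assms(1)
  by (simp add: bform_def sum_delta_inner sum_negf)

lemma test_Pp:
  assumes "i \<in> edges N" "tgt N i \<in> verts N"
  shows "bform N (\<lambda>i j. 0) (\<lambda>i j. 0) (\<lambda>i'. if i' = i then x else 0) (\<lambda>i. 0) (\<lambda>i. 0) (\<lambda>i. 0) 0 0 v w V W
     = x \<bullet> ev (v i) (len N i) - x \<bullet> V (tgt N i)"
  using sum_Aplus_delta[OF assms, of x V] assms(1)
  by (simp add: bform_def sum_delta_inner)

lemma test_Pm:
  assumes "i \<in> edges N" "src N i \<in> verts N"
  shows "bform N (\<lambda>i j. 0) (\<lambda>i j. 0) (\<lambda>i. 0) (\<lambda>i'. if i' = i then x else 0) (\<lambda>i. 0) (\<lambda>i. 0) 0 0 v w V W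
     = - (x \<bullet> ev (v i) 0) + x \<bullet> V (src N i)"
  using sum_Aminus_delta[OF assms, of x V] assms(1)
  by (simp add: bform_def sum_delta_inner sum_negf)


lemma sq_integrable: "(\<lambda>s. ev p s \<bullet> ev p s) integrable_on {a..b}"
  by (intro integrable_continuous_real continuous_intros ev_cont)

lemma int_neg_sq: "integral {a..b} (\<lambda>s. - (ev p s \<bullet> ev p s)) = - integral {a..b} (\<lambda>s. ev p s \<bullet> ev p s)"
  by (rule integral_neg)

lemma test_q:
  "bform N (\<lambda>i. dv (w i)) (\<lambda>i j. 0) (\<lambda>i. 0) (\<lambda>i. 0) (\<lambda>i. 0) (\<lambda>i. 0) 0 0 v w V W
     = - (\<Sum>i\<in>edges N. integral {0..len N i} (\<lambda>s. ev (dv (w i)) s \<bullet> ev (dv (w i)) s))"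
proof -
  have "(\<Sum>i\<in>edges N. integral {0..len N i}
        (\<lambda>s. - (ev ((\<lambda>i j. 0) i) s \<bullet> (ev (dv (v i)) s + cross3 (tang N i) (ev (w i) s)))
             - ev (dv (w i)) s \<bullet> ev (dv (w i)) s))
      = (\<Sum>i\<in>edges N. - integral {0..len N i} (\<lambda>s. ev (dv (w i)) s \<bullet> ev (dv (w i)) s))"
    by (intro sum.cong refl) (simp add: int_neg_sq)
  then show ?thesis unfolding bform_def by (simp add: sum_negf)
qed

lemma ev_zero_fun: "ev (\<lambda>j. 0) = (\<lambda>s. 0)"
  by (rule ext) simp

lemma test_p:
  assumes "\<forall>i\<in>edges N. w i = (\<lambda>j. 0)"
  shows "bform N (\<lambda>i j. 0) (\<lambda>i. dv (v i)) (\<lambda>i. 0) (\<lambda>i. 0) (\<lambda>i. 0) (\<lambda>i. 0) 0 0 v w V W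
     = - (\<Sum>i\<in>edges N. integral {0..len N i} (\<lambda>s. ev (dv (v i)) s \<bullet> ev (dv (v i)) s))"
proof -
  have "(\<Sum>i\<in>edges N. integral {0..len N i}
        (\<lambda>s. - (ev (dv (v i)) s \<bullet> (ev (dv (v i)) s + cross3 (tang N i) (ev (w i) s)))
             - ev ((\<lambda>i j. 0) i) s \<bullet> ev (dv (w i)) s))
      = (\<Sum>i\<in>edges N. - integral {0..len N i} (\<lambda>s. ev (dv (v i)) s \<bullet> ev (dv (v i)) s))"
  proof (rule sum.cong[OF refl])
    fix i assume i: "i \<in> edges N"
    have wi: "w i = (\<lambda>j. 0)" using assms i by (rule bspec)
    show "integral {0..len N i}
        (\<lambda>s. - (ev (dv (v i)) s \<bullet> (ev (dv (v i)) s + cross3 (tang N i) (ev (w i) s)))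
             - ev ((\<lambda>i j. 0) i) s \<bullet> ev (dv (w i)) s)
      = - integral {0..len N i} (\<lambda>s. ev (dv (v i)) s \<bullet> ev (dv (v i)) s)"
      unfolding wi by (simp add: int_neg_sq)
  qed
  moreover have "(\<Sum>i\<in>edges N. Qp i \<bullet> ev (w i) (len N i) - Qm i \<bullet> ev (w i) 0) = 0" for Qp Qm :: "nat \<Rightarrow> real^3"
    using assms by (intro sum.neutral) simp
  moreover have "netint N w = 0" unfolding netint_def
    using assms by (intro sum.neutral) (simp add: ev_zero_fun)
  ultimately show ?thesis unfolding bform_def by (simp add: sum_negf)
qed

lemma sum_sq_zero:
  assumes lp: "\<forall>i\<in>edges N. len N i > 0"
    and S: "(\<Sum>i\<in>edges N. integral {0..len N i} (\<lambda>s. ev (u i) s \<bullet> ev (u i) s)) = 0"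
  shows "\<forall>i\<in>edges N. u i = (\<lambda>j. 0)"
proof -
  have nn: "0 \<le> integral {0..len N i} (\<lambda>s. ev (u i) s \<bullet> ev (u i) s)" for i
    by (rule integral_nonneg[OF sq_integrable]) simp
  have "(\<Sum>i\<in>edges N. integral {0..len N i} (\<lambda>s. ev (u i) s \<bullet> ev (u i) s)) = 0 \<longleftrightarrow>
        (\<forall>i\<in>edges N. integral {0..len N i} (\<lambda>s. ev (u i) s \<bullet> ev (u i) s) = 0)"
    by (rule sum_nonneg_eq_0_iff[OF fin_edges nn])
  then have Z: "\<forall>i\<in>edges N. integral {0..len N i} (\<lambda>s. ev (u i) s \<bullet> ev (u i) s) = 0"
    using S by (rule iffD1)
  show ?thesis
  proof
    fix i assume i: "i \<in> edges N"
    show "u i = (\<lambda>j. 0)" by (rule sq_int_zero[OF bspec[OF lp i] bspec[OF Z i]])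
  qed
qed

lemma ip_zero: "(\<And>x::real^3. x \<bullet> a = x \<bullet> b) \<Longrightarrow> a = b"
  by (metis inner_diff_right inner_eq_zero_iff right_minus_eq)

theorem lemma4p2:
  fixes N :: network and n k :: nat and v w :: pfun and V W :: "nat \<Rightarrow> real^3"
  assumes "straight_network N"
    and "n \<ge> 1" and "k + 1 \<ge> n"
    and "inP N n v" and "inP N n w"
    and "\<forall>q p Pp Pm Qp Qm \<alpha> \<beta>. inP N k q \<longrightarrow> inP N k p \<longrightarrow>
           bform N q p Pp Pm Qp Qm \<alpha> \<beta> v w V W = 0"
  shows "(\<forall>i\<in>edges N. v i = (\<lambda>j. 0) \<and> w i = (\<lambda>j. 0)) \<and>
         (\<forall>j\<in>verts N. V j = 0 \<and> W j = 0)"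
proof -
  note sn = assms(1)
  have H: "bform N q p Pp Pm Qp Qm \<alpha> \<beta> v w V W = 0" if "inP N k q" "inP N k p" for q p Pp Pm Qp Qm \<alpha> \<beta>
    using assms(6) that by blast
  have Z: "inP N k (\<lambda>i j. 0)" by (simp add: inP_def)
  have lpos: "\<forall>i\<in>edges N. len N i > 0" using sn by (simp add: straight_network_def)
  have sv: "src N i \<in> verts N" "tgt N i \<in> verts N" if "i \<in> edges N" for i
    using sn that by (simp_all add: straight_network_def)
  have dvP: "inP N k (\<lambda>i. dv (u i))" if u: "inP N n u" for u
    unfolding inP_def dv_def
  proof (intro ballI allI)
    fix i j assume i: "i \<in> edges N"
    have "degree (u i j) \<le> n" using u i by (simp add: inP_def)
    moreover have "degree (pderiv (u i j)) = degree (u i j) - 1" by (rule degree_pderiv)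
    ultimately show "degree (pderiv (u i j)) \<le> k" using assms(3) by linarith
  qed
  have "bform N (\<lambda>i. dv (w i)) (\<lambda>i j. 0) (\<lambda>i. 0) (\<lambda>i. 0) (\<lambda>i. 0) (\<lambda>i. 0) 0 0 v w V W = 0"
    by (rule H[OF dvP[OF assms(5)] Z])
  then have "- (\<Sum>i\<in>edges N. integral {0..len N i} (\<lambda>s. ev (dv (w i)) s \<bullet> ev (dv (w i)) s)) = 0"
    unfolding test_q .
  then have "(\<Sum>i\<in>edges N. integral {0..len N i} (\<lambda>s. ev (dv (w i)) s \<bullet> ev (dv (w i)) s)) = 0"
    by (simp only: neg_equal_0_iff_equal)
  then have dw: "\<forall>i\<in>edges N. dv (w i) = (\<lambda>j. 0)" by (rule sum_sq_zero[OF lpos])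
  have bw: "\<forall>i\<in>edges N. ev (w i) (len N i) = W (tgt N i) \<and> ev (w i) 0 = W (src N i)"
  proof
    fix i assume i: "i \<in> edges N"
    show "ev (w i) (len N i) = W (tgt N i) \<and> ev (w i) 0 = W (src N i)"
    proof
      show "ev (w i) (len N i) = W (tgt N i)"
      proof (rule ip_zero)
        fix x :: "real^3"
        have "bform N (\<lambda>i j. 0) (\<lambda>i j. 0) (\<lambda>i. 0) (\<lambda>i. 0) (\<lambda>i'. if i' = i then x else 0) (\<lambda>i. 0) 0 0 v w V W = 0"
          by (rule H[OF Z Z])
        then have "x \<bullet> ev (w i) (len N i) - x \<bullet> W (tgt N i) = 0" unfolding test_Qp[OF i sv(2)[OF i]] .
        then show "x \<bullet> ev (w i) (len N i) = x \<bullet> W (tgt N i)" by linarith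
      qed
      show "ev (w i) 0 = W (src N i)"
      proof (rule ip_zero)
        fix x :: "real^3"
        have "bform N (\<lambda>i j. 0) (\<lambda>i j. 0) (\<lambda>i. 0) (\<lambda>i. 0) (\<lambda>i. 0) (\<lambda>i'. if i' = i then x else 0) 0 0 v w V W = 0"
          by (rule H[OF Z Z])
        then have "- (x \<bullet> ev (w i) 0) + x \<bullet> W (src N i) = 0" unfolding test_Qm[OF i sv(1)[OF i]] .
        then show "x \<bullet> ev (w i) 0 = x \<bullet> W (src N i)" by linarith
      qed
    qed
  qed
  have "bform N (\<lambda>i j. 0) (\<lambda>i j. 0) (\<lambda>i. 0) (\<lambda>i. 0) (\<lambda>i. 0) (\<lambda>i. 0) 0 (netint N w) v w V W = 0"
    by (rule H[OF Z Z])
  then have "netint N w \<bullet> netint N w = 0" unfolding test_beta .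
  then have nw: "netint N w = 0" by (simp only: inner_eq_zero_iff)
  have dw': "\<forall>i\<in>edges N. \<forall>j. pderiv (w i j) = 0"
  proof (intro ballI allI)
    fix i j assume "i \<in> edges N"
    then have "dv (w i) j = 0" using dw by simp
    then show "pderiv (w i j) = 0" by (simp add: dv_def)
  qed
  have w0: "(\<forall>i\<in>edges N. w i = (\<lambda>j. 0)) \<and> (\<forall>j\<in>verts N. W j = 0)"
    using const_zero[OF sn dw' bw nw] .
  have "bform N (\<lambda>i j. 0) (\<lambda>i. dv (v i)) (\<lambda>i. 0) (\<lambda>i. 0) (\<lambda>i. 0) (\<lambda>i. 0) 0 0 v w V W = 0"
    by (rule H[OF Z dvP[OF assms(4)]])
  then have "- (\<Sum>i\<in>edges N. integral {0..len N i} (\<lambda>s. ev (dv (v i)) s \<bullet> ev (dv (v i)) s)) = 0"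
    unfolding test_p[OF conjunct1[OF w0]] .
  then have "(\<Sum>i\<in>edges N. integral {0..len N i} (\<lambda>s. ev (dv (v i)) s \<bullet> ev (dv (v i)) s)) = 0"
    by (simp only: neg_equal_0_iff_equal)
  then have dvv: "\<forall>i\<in>edges N. dv (v i) = (\<lambda>j. 0)" by (rule sum_sq_zero[OF lpos])
  have bv: "\<forall>i\<in>edges N. ev (v i) (len N i) = V (tgt N i) \<and> ev (v i) 0 = V (src N i)"
  proof
    fix i assume i: "i \<in> edges N"
    show "ev (v i) (len N i) = V (tgt N i) \<and> ev (v i) 0 = V (src N i)"
    proof
      show "ev (v i) (len N i) = V (tgt N i)"
      proof (rule ip_zero)
        fix x :: "real^3"
        have "bform N (\<lambda>i j. 0) (\<lambda>i j. 0) (\<lambda>i'. if i' = i then x else 0) (\<lambda>i. 0) (\<lambda>i. 0) (\<lambda>i. 0) 0 0 v w V W = 0"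
          by (rule H[OF Z Z])
        then have "x \<bullet> ev (v i) (len N i) - x \<bullet> V (tgt N i) = 0" unfolding test_Pp[OF i sv(2)[OF i]] .
        then show "x \<bullet> ev (v i) (len N i) = x \<bullet> V (tgt N i)" by linarith
      qed
      show "ev (v i) 0 = V (src N i)"
      proof (rule ip_zero)
        fix x :: "real^3"
        have "bform N (\<lambda>i j. 0) (\<lambda>i j. 0) (\<lambda>i. 0) (\<lambda>i'. if i' = i then x else 0) (\<lambda>i. 0) (\<lambda>i. 0) 0 0 v w V W = 0"
          by (rule H[OF Z Z])
        then have "- (x \<bullet> ev (v i) 0) + x \<bullet> V (src N i) = 0" unfolding test_Pm[OF i sv(1)[OF i]] .
        then show "x \<bullet> ev (v i) 0 = x \<bullet> V (src N i)" by linarith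
      qed
    qed
  qed
  have "bform N (\<lambda>i j. 0) (\<lambda>i j. 0) (\<lambda>i. 0) (\<lambda>i. 0) (\<lambda>i. 0) (\<lambda>i. 0) (netint N v) 0 v w V W = 0"
    by (rule H[OF Z Z])
  then have "netint N v \<bullet> netint N v = 0" unfolding test_alpha .
  then have nv: "netint N v = 0" by (simp only: inner_eq_zero_iff)
  have dv': "\<forall>i\<in>edges N. \<forall>j. pderiv (v i j) = 0"
  proof (intro ballI allI)
    fix i j assume "i \<in> edges N"
    then have "dv (v i) j = 0" using dvv by simp
    then show "pderiv (v i j) = 0" by (simp add: dv_def)
  qed
  have v0: "(\<forall>i\<in>edges N. v i = (\<lambda>j. 0)) \<and> (\<forall>j\<in>verts N. V j = 0)"
    using const_zero[OF sn dv' bv nv] .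
  show ?thesis
  proof (intro conjI ballI)
    fix i assume i: "i \<in> edges N"
    show "v i = (\<lambda>j. 0)" using conjunct1[OF v0] i by (rule bspec)
    show "w i = (\<lambda>j. 0)" using conjunct1[OF w0] i by (rule bspec)
  next
    fix j assume j: "j \<in> verts N"
    show "V j = 0" using conjunct2[OF v0] j by (rule bspec)
    show "W j = 0" using conjunct2[OF w0] j by (rule bspec)
  qed
qed

end
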